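(* Let $\mu$ be a boundedly supported Borel probability measure on $\mathbb{R}$ and let $q_0>1$ be such that $\alpha_0=\tau_\mu'(q_0)$ exists. For every $\kappa>0$ there is $\varepsilon=\varepsilon(\kappa,q_0)>0$ such that for all sufficiently large $m$: if $\mathcal{D}'\subset\mathcal{D}_m$ has at most $2^{(\tau_\mu^*(\alpha_0)-\kappa)m}$ elements, then \[ \sum_{J\in\mathcal{D}'}\mu(J)^{q_0}\le 2^{-(\tau_\mu(q_0)+\varepsilon)m}. \]
   Context: Logs base 2. $\mathcal{D}_m=\{[j2^{-m},(j+1)2^{-m}):j\in\mathbb{Z}\}$. For $q>0$, $\tau_\mu(q)=\liminf_{m\to\infty}-\frac1m\log\sum_{J\in\mathcal{D}_m,\mu(J)>0}\mu(J)^q$, and $\tau_\mu^*(\alpha)=\inf_{q>0}(\alpha q-\tau_\mu(q))$. *)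

theory Defs
  imports "HOL-Probability.Probability"
begin

definition dyadic :: "nat \<Rightarrow> int \<Rightarrow> real set" where
  "dyadic m j = {real_of_int j * 2 powr (- real m) ..< (real_of_int j + 1) * 2 powr (- real m)}"

definition dyadics :: "nat \<Rightarrow> real set set" where
  "dyadics m = range (dyadic m)"

definition moment_sum :: "real measure \<Rightarrow> real \<Rightarrow> nat \<Rightarrow> real" where
  "moment_sum \<mu> q m = (\<Sum>J\<in>{J\<in>dyadics m. measure \<mu> J > 0}. measure \<mu> J powr q)"

definition tau :: "real measure \<Rightarrow> real \<Rightarrow> real" where
  "tau \<mu> q = real_of_ereal (liminf (\<lambda>m. ereal (- (1 / real m) * log 2 (moment_sum \<mu> q m))))"

definition tau_star :: "real measure \<Rightarrow> real \<Rightarrow> real" where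
  "tau_star \<mu> \<alpha> = (INF q\<in>{0<..}. \<alpha> * q - tau \<mu> q)"

end

theory Submission
  imports Defs
begin

lemma dyadic_alt: "dyadic m j = {real_of_int j / 2^m ..< (real_of_int j + 1) / 2^m}"
  unfolding dyadic_def by (simp add: powr_minus_divide powr_realpow)

lemma dyadic_disj: assumes "j \<noteq> k" shows "dyadic m j \<inter> dyadic m k = {}"
proof -
  have p: "(0::real) < 2^m" by simp
  { fix a b :: int assume "a < b"
    then have "real_of_int a + 1 \<le> real_of_int b" by linarith
    then have "(real_of_int a + 1) / 2^m \<le> real_of_int b / 2^m" using p by (simp add: divide_right_mono)
    then have "dyadic m a \<inter> dyadic m b = {}" unfolding dyadic_alt by auto }
  then show ?thesis using assms by (metis Int_commute linorder_neqE)
qed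

lemma dyadic_mem: "x \<in> dyadic m \<lfloor>x * 2^m\<rfloor>"
proof -
  have p: "(0::real) < 2^m" by simp
  have "real_of_int \<lfloor>x * 2^m\<rfloor> \<le> x * 2^m" "x * 2^m < real_of_int \<lfloor>x * 2^m\<rfloor> + 1" by linarith+
  then show ?thesis unfolding dyadic_alt using p by (simp add: field_simps)
qed

lemma dyadic_nonempty: "dyadic m j \<noteq> {}"
  unfolding dyadic_alt by (auto simp: divide_strict_right_mono)

lemma dyadic_inj: "inj (dyadic m)"
  by (rule injI) (metis dyadic_disj dyadic_nonempty inf.idem)

lemma dyadic_borel: "dyadic m j \<in> sets borel"
  unfolding dyadic_def by simp

lemma dyadic_meet: assumes "x \<in> dyadic m j" "-R \<le> x" "x \<le> R"
  shows "j \<in> {\<lfloor>-R * 2^m\<rfloor> .. \<lfloor>R * 2^m\<rfloor>}"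
proof -
  have p: "(0::real) < 2^m" by simp
  from assms(1) have "real_of_int j / 2^m \<le> x" "x < (real_of_int j + 1) / 2^m" unfolding dyadic_alt by auto
  then have a: "real_of_int j \<le> x * 2^m" "x * 2^m < real_of_int j + 1" using p by (simp_all add: field_simps)
  have "real_of_int j \<le> R * 2^m" using a assms p by (smt (verit) mult_right_mono)
  moreover have "-R * 2^m < real_of_int j + 1" using a assms p by (smt (verit) mult_right_mono)
  ultimately show ?thesis by (simp; linarith)
qed

locale setting =
  fixes \<mu> :: "real measure" and R :: real
  assumes ps: "prob_space \<mu>" and sb: "sets \<mu> = sets borel" and R1: "measure \<mu> {-R..R} = 1"
begin

definition "P m = {J\<in>dyadics m. measure \<mu> J > 0}"
definition "Jset m = {\<lfloor>-R * 2^m\<rfloor> .. \<lfloor>R * 2^m\<rfloor>}"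

lemma space_UNIV: "space \<mu> = UNIV"
  using sets_eq_imp_space_eq[OF sb] by simp

lemma R_nonneg: "R \<ge> 0"
proof (rule ccontr)
  assume "\<not> R \<ge> 0" then have "{-R..R} = {}" by auto
  with R1 show False by simp
qed

lemma zero_outside: assumes "J \<inter> {-R..R} = {}" shows "measure \<mu> J = 0"
proof -
  interpret prob_space \<mu> by (rule ps)
  have "J \<subseteq> space \<mu> - {-R..R}" using assms space_UNIV by auto
  moreover have "{-R..R} \<in> sets \<mu>" using sb by simp
  moreover have "measure \<mu> (space \<mu> - {-R..R}) = 0" using prob_compl[of "{-R..R}"] R1 sb by simp
  ultimately have "measure \<mu> J \<le> 0"
    by (metis finite_measure_mono measure_nonneg measure_notin_sets sets.compl_sets)
  then show ?thesis by (simp add: measure_nonneg order_antisym)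
qed

lemma P_sub: "P m \<subseteq> dyadic m ` Jset m"
proof
  fix J assume J: "J \<in> P m"
  then obtain j where j: "J = dyadic m j" "measure \<mu> J > 0" unfolding P_def dyadics_def by auto
  then have "J \<inter> {-R..R} \<noteq> {}" using zero_outside by fastforce
  then obtain x where "x \<in> dyadic m j" "-R \<le> x" "x \<le> R" using j by auto
  then have "j \<in> Jset m" unfolding Jset_def using dyadic_meet by blast
  then show "J \<in> dyadic m ` Jset m" using j by auto
qed

lemma finite_Jset: "finite (Jset m)" unfolding Jset_def by simp

lemma finite_P: "finite (P m)"
  using P_sub finite_Jset finite_subset by blast

lemma card_Jset: "real (card (Jset m)) \<le> (2*R + 2) * 2^m"
proof -
  have "\<lfloor>R * 2^m\<rfloor> - \<lfloor>-R * 2^m\<rfloor> + 1 \<ge> 0" using R_nonneg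
  proof -
    have "-R * 2^m \<le> R * 2^m" using R_nonneg by simp
    then have "\<lfloor>-R * 2^m\<rfloor> \<le> \<lfloor>R * 2^m\<rfloor>" by (rule floor_mono)
    then show ?thesis by simp
  qed
  then have "real (card (Jset m)) = real_of_int (\<lfloor>R * 2^m\<rfloor> - \<lfloor>-R * 2^m\<rfloor> + 1)"
    unfolding Jset_def by (simp only: card_atLeastAtMost_int of_nat_nat)
  also have "\<dots> \<le> 2 * R * 2^m + 2" by linarith
  also have "\<dots> \<le> (2*R + 2) * 2^m" by (simp add: algebra_simps)
  finally show ?thesis .
qed

lemma card_P: "real (card (P m)) \<le> (2*R + 2) * 2^m"
proof -
  have "card (P m) \<le> card (dyadic m ` Jset m)" using P_sub finite_Jset by (simp add: card_mono)
  also have "\<dots> \<le> card (Jset m)" by (rule card_image_le[OF finite_Jset])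
  finally show ?thesis using card_Jset by (meson of_nat_le_iff order_trans)
qed

lemma meas_nonneg: "measure \<mu> J \<ge> 0" by simp

lemma meas_le1: "measure \<mu> J \<le> 1"
  using ps prob_space.prob_le_1 by blast

lemma sum_P_le1: "(\<Sum>J\<in>P m. measure \<mu> J) \<le> 1"
proof -
  have d: "disjoint_family_on (\<lambda>J. J) (P m)"
  proof (unfold disjoint_family_on_def, intro ballI impI)
    fix J1 J2 assume "J1 \<in> P m" "J2 \<in> P m" "J1 \<noteq> J2"
    then obtain j k where "J1 = dyadic m j" "J2 = dyadic m k" "j \<noteq> k" unfolding P_def dyadics_def by auto
    then show "J1 \<inter> J2 = {}" using dyadic_disj by simp
  qed
  have s: "(\<lambda>J. J) ` P m \<subseteq> sets \<mu>" unfolding P_def dyadics_def using sb dyadic_borel by auto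
  have fm: "finite_measure \<mu>" using ps prob_space_def by blast
  have "measure \<mu> (\<Union>J\<in>P m. J) = (\<Sum>J\<in>P m. measure \<mu> J)"
    by (rule measure_finite_Union[OF finite_P s d]) (use finite_measure.emeasure_finite[OF fm] in auto)
  then show ?thesis using meas_le1 by metis
qed

lemma sum_P_ge1: "(\<Sum>J\<in>P m. measure \<mu> J) \<ge> 1"
proof -
  have "{-R..R} \<subseteq> (\<Union>j\<in>Jset m. dyadic m j)"
  proof
    fix x assume "x \<in> {-R..R}"
    then show "x \<in> (\<Union>j\<in>Jset m. dyadic m j)" using dyadic_mem[of x m] dyadic_meet[of x m]
      unfolding Jset_def by fastforce
  qed
  then have "1 \<le> measure \<mu> (\<Union>j\<in>Jset m. dyadic m j)" using R1
    by (metis finite_measure.finite_measure_mono prob_space.axioms(1)[OF ps] sb dyadic_borel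
        finite_Jset sets.finite_UN)
  also have "\<dots> \<le> (\<Sum>j\<in>Jset m. measure \<mu> (dyadic m j))"
    using finite_Jset sb dyadic_borel by (intro measure_UNION_le) auto
  also have "\<dots> = (\<Sum>J\<in>dyadic m ` Jset m. measure \<mu> J)"
    using dyadic_inj by (simp add: sum.reindex inj_on_def inj_def)
  also have "\<dots> = (\<Sum>J\<in>P m. measure \<mu> J)"
    using P_sub finite_Jset by (intro sum.mono_neutral_right) (auto simp: P_def dyadics_def less_le)
  finally show ?thesis .
qed

lemma P_big: "\<exists>J\<in>P m. measure \<mu> J \<ge> 1 / real (card (P m))"
proof (rule ccontr)
  assume "\<not> ?thesis"
  then have a: "\<And>J. J \<in> P m \<Longrightarrow> measure \<mu> J < 1 / real (card (P m))" by force
  have ne: "P m \<noteq> {}" using sum_P_ge1[of m] by auto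
  have "(\<Sum>J\<in>P m. measure \<mu> J) < (\<Sum>J\<in>P m. 1 / real (card (P m)))"
    using a ne finite_P by (intro sum_strict_mono) auto
  also have "\<dots> = 1" using ne finite_P by simp
  finally show False using sum_P_ge1[of m] by simp
qed

end

lemma holder_sum:
  fixes a :: "'i \<Rightarrow> real"
  assumes I: "finite I" "I \<noteq> {}" and a: "\<And>i. i \<in> I \<Longrightarrow> a i > 0" and l: "0 \<le> l" "l \<le> 1"
  shows "(\<Sum>i\<in>I. a i powr (l*x + (1-l)*y)) \<le> (\<Sum>i\<in>I. a i powr x) powr l * (\<Sum>i\<in>I. a i powr y) powr (1-l)"
proof -
  define A where "A = (\<Sum>i\<in>I. a i powr x)"
  define B where "B = (\<Sum>i\<in>I. a i powr y)"
  have A: "A > 0" unfolding A_def using I a by (intro sum_pos) force+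
  have B: "B > 0" unfolding B_def using I a by (intro sum_pos) force+
  have t: "a i powr (l*x + (1-l)*y) \<le> A powr l * B powr (1-l) * (l * (a i powr x / A) + (1-l) * (a i powr y / B))"
    if i: "i \<in> I" for i
  proof -
    have ai: "a i > 0" using a i by simp
    have "a i powr (l*x + (1-l)*y) = (a i powr x) powr l * (a i powr y) powr (1-l)"
      using ai by (simp add: powr_add powr_powr mult.commute)
    also have "\<dots> = A powr l * B powr (1-l) * ((a i powr x / A) powr l * (a i powr y / B) powr (1-l))"
      using A B ai by (simp add: powr_divide)
    also have "\<dots> \<le> A powr l * B powr (1-l) * (l * (a i powr x / A) + (1-l) * (a i powr y / B))"
      using A B ai l by (intro mult_left_mono Youngs_inequality_0) auto
    finally show ?thesis .
  qed
  have "(\<Sum>i\<in>I. a i powr (l*x + (1-l)*y)) \<le> (\<Sum>i\<in>I. A powr l * B powr (1-l) * (l * (a i powr x / A) + (1-l) * (a i powr y / B)))"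
    using t by (rule sum_mono)
  also have "\<dots> = A powr l * B powr (1-l) * (\<Sum>i\<in>I. l * (a i powr x / A) + (1-l) * (a i powr y / B))"
    by (simp only: sum_distrib_left)
  also have "\<dots> = A powr l * B powr (1-l) * (l * ((\<Sum>i\<in>I. a i powr x) / A) + (1-l) * ((\<Sum>i\<in>I. a i powr y) / B))"
    by (simp only: sum.distrib sum_distrib_left[symmetric] sum_divide_distrib[symmetric])
  also have "\<dots> = A powr l * B powr (1-l)" using A B unfolding A_def B_def by simp
  finally show ?thesis unfolding A_def B_def .
qed

context setting begin

lemma ms_P: "moment_sum \<mu> q m = (\<Sum>J\<in>P m. measure \<mu> J powr q)"
  unfolding moment_sum_def P_def by simp

lemma P_ne: "P m \<noteq> {}" using sum_P_ge1[of m] by auto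

lemma S_pos: "moment_sum \<mu> q m > 0"
  unfolding ms_P using finite_P P_ne by (intro sum_pos) (auto simp: P_def)

lemma S_le1: assumes "q \<ge> 1" shows "moment_sum \<mu> q m \<le> 1"
proof -
  have "moment_sum \<mu> q m \<le> (\<Sum>J\<in>P m. measure \<mu> J)" unfolding ms_P
  proof (rule sum_mono)
    fix J assume "J \<in> P m"
    then have "0 < measure \<mu> J" "measure \<mu> J \<le> 1" using meas_le1 by (auto simp: P_def)
    then show "measure \<mu> J powr q \<le> measure \<mu> J"
      using assms by (metis powr_mono' powr_one_eq_one powr_one zero_le_one less_imp_le)
  qed
  then show ?thesis using sum_P_le1[of m] by linarith
qed

lemma S_ge: assumes "q > 0" shows "moment_sum \<mu> q m \<ge> (1 / real (card (P m))) powr q"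
proof -
  obtain J where J: "J \<in> P m" "measure \<mu> J \<ge> 1 / real (card (P m))" using P_big by blast
  have "(1 / real (card (P m))) powr q \<le> measure \<mu> J powr q"
    using J assms by (intro powr_mono2) auto
  also have "\<dots> \<le> moment_sum \<mu> q m" unfolding ms_P
    using J finite_P by (intro member_le_sum) auto
  finally show ?thesis .
qed

definition "ff m q = - (1 / real m) * log 2 (moment_sum \<mu> q m)"
definition "K = log 2 (2*R+2) + 1"

lemma K_pos: "K \<ge> 1"
proof -
  have "log 2 (2*R+2) \<ge> 0" using R_nonneg by simp
  then show ?thesis unfolding K_def by simp
qed

lemma ff_nonneg: assumes "q \<ge> 1" shows "ff m q \<ge> 0"
proof -
  have "log 2 (moment_sum \<mu> q m) \<le> 0" using S_pos S_le1[OF assms] by simp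
  then show ?thesis unfolding ff_def by (simp add: divide_nonpos_nonneg)
qed

lemma ff_le: assumes "q > 0" "m \<ge> 1" shows "ff m q \<le> q * K"
proof -
  define N where "N = real (card (P m))"
  have N1: "N \<ge> 1" unfolding N_def using P_ne finite_P
    by (simp add: Suc_leI card_gt_0_iff)
  have Nle: "N \<le> (2*R+2) * 2^m" unfolding N_def by (rule card_P)
  have "log 2 ((1/N) powr q) \<le> log 2 (moment_sum \<mu> q m)"
    using S_ge[OF assms(1), of m] N1 S_pos unfolding N_def by simp
  moreover have "log 2 ((1/N) powr q) = - q * log 2 N" using N1
    by (simp add: log_powr log_divide)
  ultimately have a: "ff m q \<le> q * log 2 N / real m" unfolding ff_def using assms(2)
    by (simp add: field_simps)
  have "log 2 N \<le> log 2 ((2*R+2) * 2^m)" using N1 Nle by simp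
  also have "\<dots> = log 2 (2*R+2) + real m" using R_nonneg by (simp add: log_mult log_nat_power)
  finally have b: "log 2 N \<le> log 2 (2*R+2) + real m" .
  have c: "log 2 (2*R+2) \<ge> 0" using R_nonneg by simp
  have "q * log 2 N / real m \<le> q * (log 2 (2*R+2) + real m) / real m"
    using b assms by (intro divide_right_mono mult_left_mono) auto
  also have "\<dots> = q * (log 2 (2*R+2) / real m + 1)" using assms by (simp add: field_simps)
  also have "\<dots> \<le> q * K"
  proof -
    have "log 2 (2*R+2) / real m \<le> log 2 (2*R+2) / 1"
      using assms c by (intro divide_left_mono) auto
    then show ?thesis unfolding K_def using assms by (intro mult_left_mono) auto
  qed
  finally show ?thesis using a by linarith
qed

end

lemma liminf_fin:
  fixes g :: "nat \<Rightarrow> real"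
  assumes "\<forall>\<^sub>F m in sequentially. 0 \<le> g m \<and> g m \<le> c"
  shows "liminf (\<lambda>m. ereal (g m)) = ereal (real_of_ereal (liminf (\<lambda>m. ereal (g m))))"
proof -
  have "ereal 0 \<le> liminf (\<lambda>m. ereal (g m))"
    by (rule Liminf_bounded) (use assms in \<open>auto elim: eventually_mono\<close>)
  moreover have "liminf (\<lambda>m. ereal (g m)) \<le> ereal c"
    by (rule Liminf_le) (use assms in \<open>auto elim: eventually_mono\<close>)
  ultimately show ?thesis by (cases "liminf (\<lambda>m. ereal (g m))") auto
qed

lemma liminf_ev:
  fixes g :: "nat \<Rightarrow> real"
  assumes "\<forall>\<^sub>F m in sequentially. 0 \<le> g m \<and> g m \<le> c" "\<delta> > 0"
  shows "\<forall>\<^sub>F m in sequentially. g m > real_of_ereal (liminf (\<lambda>m. ereal (g m))) - \<delta>"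
proof -
  define L where "L = real_of_ereal (liminf (\<lambda>m. ereal (g m)))"
  have "ereal (L - \<delta>) < ereal L" using assms(2) by simp
  also have "ereal L = liminf (\<lambda>m. ereal (g m))" using liminf_fin[OF assms(1)] unfolding L_def by simp
  finally have "ereal (L - \<delta>) < liminf (\<lambda>m. ereal (g m))" .
  then have "\<forall>\<^sub>F m in sequentially. ereal (L - \<delta>) < ereal (g m)" by (rule less_LiminfD)
  then show ?thesis unfolding L_def by (auto elim: eventually_mono)
qed

lemma liminf_freq:
  fixes g :: "nat \<Rightarrow> real"
  assumes "\<forall>\<^sub>F m in sequentially. 0 \<le> g m \<and> g m \<le> c" "\<delta> > 0"
  shows "\<exists>\<^sub>F m in sequentially. g m < real_of_ereal (liminf (\<lambda>m. ereal (g m))) + \<delta>"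
proof (rule ccontr)
  define L where "L = real_of_ereal (liminf (\<lambda>m. ereal (g m)))"
  assume "\<not> (\<exists>\<^sub>F m in sequentially. g m < L + \<delta>)"
  then have "\<forall>\<^sub>F m in sequentially. ereal (L + \<delta>) \<le> ereal (g m)"
    unfolding frequently_def by (auto elim: eventually_mono)
  then have "ereal (L + \<delta>) \<le> liminf (\<lambda>m. ereal (g m))" by (rule Liminf_bounded)
  also have "liminf (\<lambda>m. ereal (g m)) = ereal L" using liminf_fin[OF assms(1)] unfolding L_def by simp
  finally show False using assms(2) by simp
qed

context setting begin

lemma tau_ff: "tau \<mu> q = real_of_ereal (liminf (\<lambda>m. ereal (ff m q)))"
  unfolding tau_def ff_def by (rule refl)

lemma ff_bnd: assumes "q > 1" shows "\<forall>\<^sub>F m in sequentially. 0 \<le> ff m q \<and> ff m q \<le> q * K"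
proof -
  have "0 \<le> ff m q \<and> ff m q \<le> q * K" if "m \<ge> 1" for m
  proof
    show "0 \<le> ff m q" using ff_nonneg[of q m] assms by linarith
    show "ff m q \<le> q * K" using ff_le[of q m] assms that by linarith
  qed
  then show ?thesis unfolding eventually_sequentially by blast
qed

lemma tau_ev: assumes "q > 1" "\<delta> > 0" shows "\<forall>\<^sub>F m in sequentially. ff m q > tau \<mu> q - \<delta>"
  unfolding tau_ff by (rule liminf_ev[OF ff_bnd[OF assms(1)] assms(2)])

lemma tau_freq: assumes "q > 1" "\<delta> > 0" shows "\<exists>\<^sub>F m in sequentially. ff m q < tau \<mu> q + \<delta>"
  unfolding tau_ff by (rule liminf_freq[OF ff_bnd[OF assms(1)] assms(2)])

lemma tau_le: assumes "q > 0" shows "tau \<mu> q \<le> q * K"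
proof -
  have "liminf (\<lambda>m. ereal (ff m q)) \<le> ereal (q * K)"
    by (rule Liminf_le) (use ff_le assms in \<open>auto simp: eventually_sequentially\<close>)
  moreover have "q * K \<ge> 0" using assms K_pos by simp
  ultimately show ?thesis unfolding tau_ff by (cases "liminf (\<lambda>m. ereal (ff m q))") auto
qed

lemma ff_concave: assumes "0 \<le> l" "l \<le> 1"
  shows "ff m (l*x + (1-l)*y) \<ge> l * ff m x + (1-l) * ff m y"
proof -
  have h: "moment_sum \<mu> (l*x + (1-l)*y) m \<le> moment_sum \<mu> x m powr l * moment_sum \<mu> y m powr (1-l)"
    unfolding ms_P using finite_P P_ne assms by (intro holder_sum) (auto simp: P_def)
  have "log 2 (moment_sum \<mu> (l*x + (1-l)*y) m) \<le> log 2 (moment_sum \<mu> x m powr l * moment_sum \<mu> y m powr (1-l))"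
    using h S_pos[of "l*x + (1-l)*y" m] by (intro log_mono) auto
  also have "\<dots> = l * log 2 (moment_sum \<mu> x m) + (1-l) * log 2 (moment_sum \<mu> y m)"
    using S_pos[of x m] S_pos[of y m] by (simp add: log_mult log_powr)
  finally have "log 2 (moment_sum \<mu> (l*x + (1-l)*y) m) \<le> l * log 2 (moment_sum \<mu> x m) + (1-l) * log 2 (moment_sum \<mu> y m)" .
  then have "- (1 / real m) * (l * log 2 (moment_sum \<mu> x m) + (1-l) * log 2 (moment_sum \<mu> y m))
      \<le> - (1 / real m) * log 2 (moment_sum \<mu> (l*x + (1-l)*y) m)"
    by (intro mult_left_mono_neg) auto
  moreover have "l * (- (1 / real m) * log 2 (moment_sum \<mu> x m)) + (1-l) * (- (1 / real m) * log 2 (moment_sum \<mu> y m))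
     = - (1 / real m) * (l * log 2 (moment_sum \<mu> x m) + (1-l) * log 2 (moment_sum \<mu> y m))"
    by (simp only: ring_distribs mult_ac)
  ultimately show ?thesis unfolding ff_def by linarith
qed

lemma tau_concave: assumes "x > 1" "y > 1" "0 \<le> l" "l \<le> 1"
  shows "tau \<mu> (l*x + (1-l)*y) \<ge> l * tau \<mu> x + (1-l) * tau \<mu> y"
proof (rule field_le_epsilon)
  fix e :: real assume e: "e > 0"
  define z where "z = l*x + (1-l)*y"
  have z: "z > 1"
  proof -
    have "l*x + (1-l)*y \<ge> l * min x y + (1-l) * min x y"
      using assms by (intro add_mono mult_left_mono) auto
    also have "l * min x y + (1-l) * min x y = min x y" by (simp add: algebra_simps)
    finally show ?thesis unfolding z_def using assms by linarith
  qed
  have ev: "\<forall>\<^sub>F m in sequentially. ff m x > tau \<mu> x - e/2 \<and> ff m y > tau \<mu> y - e/2"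
    using tau_ev[OF assms(1), of "e/2"] tau_ev[OF assms(2), of "e/2"] e by (auto elim: eventually_elim2)
  have "\<exists>\<^sub>F m in sequentially. (ff m x > tau \<mu> x - e/2 \<and> ff m y > tau \<mu> y - e/2) \<and> ff m z < tau \<mu> z + e/2"
    using frequently_eventually_conj[OF tau_freq[OF z, of "e/2"] ev] e by simp
  then obtain m where m: "ff m x > tau \<mu> x - e/2" "ff m y > tau \<mu> y - e/2" "ff m z < tau \<mu> z + e/2"
    using frequently_ex by blast
  have "l * (tau \<mu> x - e/2) + (1-l) * (tau \<mu> y - e/2) \<le> l * ff m x + (1-l) * ff m y"
    using m assms by (intro add_mono mult_left_mono) auto
  also have "\<dots> \<le> ff m z" unfolding z_def by (rule ff_concave[OF assms(3,4)])
  finally have "l * (tau \<mu> x - e/2) + (1-l) * (tau \<mu> y - e/2) \<le> ff m z" .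
  moreover have "l * (tau \<mu> x - e/2) + (1-l) * (tau \<mu> y - e/2) = l * tau \<mu> x + (1-l) * tau \<mu> y - e/2"
    by (simp add: field_simps)
  ultimately have "l * tau \<mu> x + (1-l) * tau \<mu> y - e/2 \<le> ff m z" by linarith
  then show "l * tau \<mu> x + (1-l) * tau \<mu> y \<le> tau \<mu> (l*x + (1-l)*y) + e"
    using m(3) unfolding z_def by linarith
qed

end

context setting begin

lemma deriv_eps:
  assumes d: "(tau \<mu> has_real_derivative \<alpha>\<^sub>0) (at q\<^sub>0)" and r: "r > 0"
  obtains s where "s > 0" "\<And>h. h \<noteq> 0 \<Longrightarrow> \<bar>h\<bar> < s \<Longrightarrow> \<bar>(tau \<mu> (q\<^sub>0+h) - tau \<mu> q\<^sub>0)/h - \<alpha>\<^sub>0\<bar> < r"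
proof -
  have lim: "(\<lambda>h. (tau \<mu> (q\<^sub>0+h) - tau \<mu> q\<^sub>0)/h) \<midarrow>0\<rightarrow> \<alpha>\<^sub>0" using DERIV_D[OF d] .
  from LIM_D[OF lim r] obtain s where "s > 0"
    "\<forall>h. h \<noteq> 0 \<and> norm (h - 0) < s \<longrightarrow> norm ((tau \<mu> (q\<^sub>0+h) - tau \<mu> q\<^sub>0)/h - \<alpha>\<^sub>0) < r" by blast
  then show ?thesis using that by auto
qed

lemma tangent:
  assumes q0: "q\<^sub>0 > 1" and d: "(tau \<mu> has_real_derivative \<alpha>\<^sub>0) (at q\<^sub>0)" and q: "q > q\<^sub>0"
  shows "tau \<mu> q \<le> tau \<mu> q\<^sub>0 + \<alpha>\<^sub>0 * (q - q\<^sub>0)"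
proof (rule field_le_epsilon)
  fix e :: real assume e: "e > 0"
  define dd where "dd = q - q\<^sub>0"
  have dd: "dd > 0" unfolding dd_def using q by simp
  obtain s where s: "s > 0" "\<And>h. h \<noteq> 0 \<Longrightarrow> \<bar>h\<bar> < s \<Longrightarrow> \<bar>(tau \<mu> (q\<^sub>0+h) - tau \<mu> q\<^sub>0)/h - \<alpha>\<^sub>0\<bar> < e/dd"
    using deriv_eps[OF d, of "e/dd"] e dd by auto
  define h where "h = min (s/2) (dd/2)"
  have h: "h > 0" "h < s" "h < dd" unfolding h_def using s dd by auto
  have "(tau \<mu> (q\<^sub>0+h) - tau \<mu> q\<^sub>0)/h < \<alpha>\<^sub>0 + e/dd" using s(2)[of h] h by auto
  then have D: "tau \<mu> (q\<^sub>0+h) - tau \<mu> q\<^sub>0 < (\<alpha>\<^sub>0 + e/dd) * h" using h by (simp add: pos_divide_less_eq)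
  define t where "t = h / dd"
  have t: "0 < t" "t < 1" unfolding t_def using h dd by auto
  have conc: "tau \<mu> ((1-t)*q\<^sub>0 + (1-(1-t))*q) \<ge> (1-t) * tau \<mu> q\<^sub>0 + (1-(1-t)) * tau \<mu> q"
    using q0 q t by (intro tau_concave) auto
  have e1: "(1-t)*q\<^sub>0 + (1-(1-t))*q = q\<^sub>0 + t*dd" unfolding dd_def by (simp add: algebra_simps)
  have e2: "t*dd = h" unfolding t_def using dd by simp
  have eq: "(1-t)*q\<^sub>0 + (1-(1-t))*q = q\<^sub>0 + h" using e1 e2 by simp
  have c2: "tau \<mu> (q\<^sub>0 + h) \<ge> (1-t) * tau \<mu> q\<^sub>0 + t * tau \<mu> q" using conc eq by simp
  have "t * (tau \<mu> q - tau \<mu> q\<^sub>0) = ((1-t) * tau \<mu> q\<^sub>0 + t * tau \<mu> q) - tau \<mu> q\<^sub>0"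
    by (simp add: algebra_simps)
  moreover have "(\<alpha>\<^sub>0 + e/dd) * h = t * (\<alpha>\<^sub>0 * dd + e)" unfolding t_def using dd by (simp add: field_simps)
  ultimately have "t * (tau \<mu> q - tau \<mu> q\<^sub>0) < t * (\<alpha>\<^sub>0 * dd + e)" using c2 D by linarith
  then have "tau \<mu> q - tau \<mu> q\<^sub>0 < \<alpha>\<^sub>0 * dd + e" using t by simp
  then show "tau \<mu> q \<le> tau \<mu> q\<^sub>0 + \<alpha>\<^sub>0 * (q - q\<^sub>0) + e" unfolding dd_def by linarith
qed

lemma bdd:
  assumes q0: "q\<^sub>0 > 1" and d: "(tau \<mu> has_real_derivative \<alpha>\<^sub>0) (at q\<^sub>0)"
  shows "bdd_below ((\<lambda>q. \<alpha>\<^sub>0 * q - tau \<mu> q) ` {0<..})"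
proof -
  define M where "M = min (\<alpha>\<^sub>0 * q\<^sub>0 - tau \<mu> q\<^sub>0) (- \<bar>\<alpha>\<^sub>0\<bar> * q\<^sub>0 - q\<^sub>0 * K)"
  have "M \<le> \<alpha>\<^sub>0 * q - tau \<mu> q" if "q > 0" for q
  proof (cases "q \<le> q\<^sub>0")
    case True
    have "\<bar>\<alpha>\<^sub>0 * q\<bar> \<le> \<bar>\<alpha>\<^sub>0\<bar> * q\<^sub>0" using True that by (simp add: abs_mult mult_left_mono)
    then have a: "\<alpha>\<^sub>0 * q \<ge> - \<bar>\<alpha>\<^sub>0\<bar> * q\<^sub>0" by linarith
    have "tau \<mu> q \<le> q * K" by (rule tau_le[OF that])
    also have "\<dots> \<le> q\<^sub>0 * K" using True K_pos by (simp add: mult_right_mono)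
    finally show ?thesis unfolding M_def using a by linarith
  next
    case False
    then show ?thesis using tangent[OF q0 d, of q] unfolding M_def by (simp add: algebra_simps)
  qed
  then show ?thesis unfolding bdd_below_def by blast
qed

lemma tau_star_le:
  assumes q0: "q\<^sub>0 > 1" and d: "(tau \<mu> has_real_derivative \<alpha>\<^sub>0) (at q\<^sub>0)"
  shows "tau_star \<mu> \<alpha>\<^sub>0 \<le> \<alpha>\<^sub>0 * q\<^sub>0 - tau \<mu> q\<^sub>0"
  unfolding tau_star_def by (rule cINF_lower[OF bdd[OF q0 d]]) (use q0 in simp)

end

context setting begin

lemma S_bound: assumes "ff m p > c" "m \<ge> 1" shows "moment_sum \<mu> p m < 2 powr (- c * real m)"
proof -
  have "- (1 / real m) * log 2 (moment_sum \<mu> p m) > c" using assms(1) unfolding ff_def .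
  then have "log 2 (moment_sum \<mu> p m) < - c * real m" using assms(2)
    by (simp add: field_simps)
  then have "2 powr (log 2 (moment_sum \<mu> p m)) < 2 powr (- c * real m)" by simp
  then show ?thesis using S_pos by simp
qed

lemma main:
  assumes q0: "q\<^sub>0 > 1" and d: "(tau \<mu> has_real_derivative \<alpha>\<^sub>0) (at q\<^sub>0)"
  shows "\<forall>\<kappa>>0. \<exists>\<epsilon>>0. \<forall>\<^sub>F m in sequentially.
           \<forall>D'. D' \<subseteq> dyadics m \<and> finite D' \<and>
                real (card D') \<le> 2 powr ((tau_star \<mu> \<alpha>\<^sub>0 - \<kappa>) * real m) \<longrightarrow>
                (\<Sum>J\<in>D'. measure \<mu> J powr q\<^sub>0) \<le> 2 powr (- (tau \<mu> q\<^sub>0 + \<epsilon>) * real m)"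
proof (intro allI impI)
  fix \<kappa> :: real assume \<kappa>: "\<kappa> > 0"
  define \<eta> where "\<eta> = \<kappa> / (2 * q\<^sub>0)"
  have \<eta>: "\<eta> > 0" "\<eta> * q\<^sub>0 = \<kappa> / 2" unfolding \<eta>_def using \<kappa> q0 by auto
  obtain s where s: "s > 0" "\<And>h. h \<noteq> 0 \<Longrightarrow> \<bar>h\<bar> < s \<Longrightarrow> \<bar>(tau \<mu> (q\<^sub>0+h) - tau \<mu> q\<^sub>0)/h - \<alpha>\<^sub>0\<bar> < \<eta>/2"
    using deriv_eps[OF d, of "\<eta>/2"] \<eta> by auto
  define h where "h = s / 2"
  have h: "h > 0" "h < s" unfolding h_def using s by auto
  define p where "p = q\<^sub>0 + h"
  have p: "p > 1" unfolding p_def using h q0 by simp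
  have "\<bar>(tau \<mu> p - tau \<mu> q\<^sub>0)/h - \<alpha>\<^sub>0\<bar> < \<eta>/2" using s(2)[of h] h unfolding p_def by auto
  then have "(tau \<mu> p - tau \<mu> q\<^sub>0)/h > \<alpha>\<^sub>0 - \<eta>/2" by (simp only: abs_less_iff) linarith
  then have Tp: "tau \<mu> p - tau \<mu> q\<^sub>0 > (\<alpha>\<^sub>0 - \<eta>/2) * h" using h by (simp add: pos_less_divide_eq)
  define a where "a = \<alpha>\<^sub>0 - \<eta>"
  define \<delta> where "\<delta> = \<eta> * h / 4"
  have \<delta>: "\<delta> > 0" unfolding \<delta>_def using \<eta> h by simp
  define e where "e = min (\<kappa>/2) (\<eta> * h / 4)"
  have e: "e > 0" "e \<le> \<kappa>/2" "e \<le> \<eta> * h / 4" unfolding e_def using \<kappa> \<eta> h by auto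
  have tsle: "tau_star \<mu> \<alpha>\<^sub>0 \<le> \<alpha>\<^sub>0 * q\<^sub>0 - tau \<mu> q\<^sub>0" by (rule tau_star_le[OF q0 d])
  define N where "N = nat \<lceil>2 / e\<rceil> + 1"
  have ev: "\<forall>\<^sub>F m in sequentially. ff m p > tau \<mu> p - \<delta> \<and> m \<ge> N"
    using tau_ev[OF p \<delta>] eventually_ge_at_top[of N] by (rule eventually_conj)
  show "\<exists>\<epsilon>>0. \<forall>\<^sub>F m in sequentially.
           \<forall>D'. D' \<subseteq> dyadics m \<and> finite D' \<and>
                real (card D') \<le> 2 powr ((tau_star \<mu> \<alpha>\<^sub>0 - \<kappa>) * real m) \<longrightarrow>
                (\<Sum>J\<in>D'. measure \<mu> J powr q\<^sub>0) \<le> 2 powr (- (tau \<mu> q\<^sub>0 + \<epsilon>) * real m)"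
  proof (intro exI conjI)
    show "e/2 > 0" using e by simp
    show "\<forall>\<^sub>F m in sequentially.
           \<forall>D'. D' \<subseteq> dyadics m \<and> finite D' \<and>
                real (card D') \<le> 2 powr ((tau_star \<mu> \<alpha>\<^sub>0 - \<kappa>) * real m) \<longrightarrow>
                (\<Sum>J\<in>D'. measure \<mu> J powr q\<^sub>0) \<le> 2 powr (- (tau \<mu> q\<^sub>0 + e/2) * real m)"
      using ev
    proof (rule eventually_mono, intro allI impI)
      fix m D' assume m: "ff m p > tau \<mu> p - \<delta> \<and> m \<ge> N"
        and D': "D' \<subseteq> dyadics m \<and> finite D' \<and> real (card D') \<le> 2 powr ((tau_star \<mu> \<alpha>\<^sub>0 - \<kappa>) * real m)"
      have m1: "m \<ge> 1" using m unfolding N_def by simp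
      have mN: "real m \<ge> 2 / e" using m unfolding N_def by linarith
      define t where "t = 2 powr (- a * real m)"
      have t: "t > 0" unfolding t_def by simp
      define g where "g J = (if measure \<mu> J > 0 then measure \<mu> J powr p else 0)" for J
      have trm: "measure \<mu> J powr q\<^sub>0 \<le> t powr q\<^sub>0 + t powr (-h) * g J" for J
      proof (cases "measure \<mu> J \<le> t")
        case True
        then have "measure \<mu> J powr q\<^sub>0 \<le> t powr q\<^sub>0" using q0 by (intro powr_mono2) auto
        moreover have "t powr (-h) * g J \<ge> 0" unfolding g_def by simp
        ultimately show ?thesis by linarith
      next
        case False
        then have pos: "measure \<mu> J > 0" "measure \<mu> J > t" using t by auto
        have "measure \<mu> J powr q\<^sub>0 = measure \<mu> J powr p * measure \<mu> J powr (-h)"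
          unfolding p_def using pos by (simp add: powr_add[symmetric])
        also have "\<dots> \<le> measure \<mu> J powr p * t powr (-h)"
          using pos t h by (intro mult_left_mono powr_mono2') auto
        also have "\<dots> = t powr (-h) * g J" unfolding g_def using pos by simp
        finally have "measure \<mu> J powr q\<^sub>0 \<le> t powr (-h) * g J" .
        moreover have "t powr q\<^sub>0 \<ge> 0" by simp
        ultimately show ?thesis by linarith
      qed
      have fin: "finite D'" using D' by simp
      have "(\<Sum>J\<in>D'. measure \<mu> J powr q\<^sub>0) \<le> (\<Sum>J\<in>D'. t powr q\<^sub>0 + t powr (-h) * g J)"
        by (rule sum_mono) (rule trm)
      also have "\<dots> = real (card D') * t powr q\<^sub>0 + t powr (-h) * (\<Sum>J\<in>D'. g J)"
        by (simp add: sum.distrib sum_distrib_left)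
      finally have split: "(\<Sum>J\<in>D'. measure \<mu> J powr q\<^sub>0) \<le> real (card D') * t powr q\<^sub>0 + t powr (-h) * (\<Sum>J\<in>D'. g J)" .
      have "(\<Sum>J\<in>D'. g J) = (\<Sum>J\<in>{J\<in>D'. measure \<mu> J > 0}. measure \<mu> J powr p)"
        unfolding g_def using fin by (simp add: sum.inter_filter)
      also have "\<dots> \<le> (\<Sum>J\<in>P m. measure \<mu> J powr p)"
        using D' finite_P by (intro sum_mono2) (auto simp: P_def)
      also have "\<dots> = moment_sum \<mu> p m" by (simp add: ms_P)
      also have "\<dots> < 2 powr (- (tau \<mu> p - \<delta>) * real m)" using S_bound m m1 by blast
      finally have gs: "(\<Sum>J\<in>D'. g J) \<le> 2 powr (- (tau \<mu> p - \<delta>) * real m)" by simp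
      have "real (card D') * t powr q\<^sub>0 \<le> 2 powr ((tau_star \<mu> \<alpha>\<^sub>0 - \<kappa>) * real m) * t powr q\<^sub>0"
        using D' by (intro mult_right_mono) auto
      also have "\<dots> = 2 powr (((tau_star \<mu> \<alpha>\<^sub>0 - \<kappa>) - a * q\<^sub>0) * real m)"
        unfolding t_def by (simp add: powr_powr powr_add[symmetric] algebra_simps)
      also have "\<dots> \<le> 2 powr (- (tau \<mu> q\<^sub>0 + e) * real m)"
      proof (intro powr_mono mult_right_mono)
        have "a * q\<^sub>0 = \<alpha>\<^sub>0 * q\<^sub>0 - \<kappa>/2" unfolding a_def using \<eta> by (simp add: algebra_simps)
        then show "(tau_star \<mu> \<alpha>\<^sub>0 - \<kappa>) - a * q\<^sub>0 \<le> - (tau \<mu> q\<^sub>0 + e)" using tsle e by linarith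
      qed auto
      finally have T1: "real (card D') * t powr q\<^sub>0 \<le> 2 powr (- (tau \<mu> q\<^sub>0 + e) * real m)" .
      have "t powr (-h) * (\<Sum>J\<in>D'. g J) \<le> t powr (-h) * 2 powr (- (tau \<mu> p - \<delta>) * real m)"
        using gs by (intro mult_left_mono) auto
      also have "\<dots> = 2 powr ((a * h - (tau \<mu> p - \<delta>)) * real m)"
        unfolding t_def by (simp add: powr_powr powr_add[symmetric] algebra_simps)
      also have "\<dots> \<le> 2 powr (- (tau \<mu> q\<^sub>0 + e) * real m)"
      proof (intro powr_mono mult_right_mono)
        have "a * h - (tau \<mu> p - \<delta>) < (\<alpha>\<^sub>0 - \<eta>) * h - tau \<mu> q\<^sub>0 - (\<alpha>\<^sub>0 - \<eta>/2) * h + \<eta> * h / 4"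
          using Tp unfolding a_def \<delta>_def by linarith
        also have "\<dots> = - tau \<mu> q\<^sub>0 - \<eta> * h / 4" by (simp add: algebra_simps)
        finally show "a * h - (tau \<mu> p - \<delta>) \<le> - (tau \<mu> q\<^sub>0 + e)" using e by linarith
      qed auto
      finally have T2: "t powr (-h) * (\<Sum>J\<in>D'. g J) \<le> 2 powr (- (tau \<mu> q\<^sub>0 + e) * real m)" .
      have "(\<Sum>J\<in>D'. measure \<mu> J powr q\<^sub>0) \<le> 2 * 2 powr (- (tau \<mu> q\<^sub>0 + e) * real m)"
        using split T1 T2 by linarith
      also have "\<dots> \<le> 2 powr (e/2 * real m) * 2 powr (- (tau \<mu> q\<^sub>0 + e) * real m)"
      proof (intro mult_right_mono)
        have "1 \<le> e/2 * real m" using mN e by (simp add: field_simps)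
        then have "2 powr 1 \<le> 2 powr (e/2 * real m)" by (intro powr_mono) auto
        then show "2 \<le> 2 powr (e/2 * real m)" by simp
      qed auto
      also have "\<dots> = 2 powr (e/2 * real m + (- (tau \<mu> q\<^sub>0 + e) * real m))"
        by (simp only: powr_add)
      also have "\<dots> = 2 powr (- (tau \<mu> q\<^sub>0 + e/2) * real m)"
        by (rule arg_cong[where f="\<lambda>x. 2 powr x"]) (simp add: algebra_simps)
      finally show "(\<Sum>J\<in>D'. measure \<mu> J powr q\<^sub>0) \<le> 2 powr (- (tau \<mu> q\<^sub>0 + e/2) * real m)" .
    qed
  qed
qed

end

theorem lemma3p9:
  fixes \<mu> :: "real measure" and q\<^sub>0 \<alpha>\<^sub>0 :: real
  assumes "prob_space \<mu>"
    and "sets \<mu> = sets borel"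
    and "\<exists>R. measure \<mu> {-R..R} = 1"
    and "q\<^sub>0 > 1"
    and "(tau \<mu> has_real_derivative \<alpha>\<^sub>0) (at q\<^sub>0)"
  shows "\<forall>\<kappa>>0. \<exists>\<epsilon>>0. \<forall>\<^sub>F m in sequentially.
           \<forall>D'. D' \<subseteq> dyadics m \<and> finite D' \<and>
                real (card D') \<le> 2 powr ((tau_star \<mu> \<alpha>\<^sub>0 - \<kappa>) * real m) \<longrightarrow>
                (\<Sum>J\<in>D'. measure \<mu> J powr q\<^sub>0) \<le> 2 powr (- (tau \<mu> q\<^sub>0 + \<epsilon>) * real m)"
proof -
  obtain R where R: "measure \<mu> {-R..R} = 1" using assms(3) by blast
  interpret setting \<mu> R by (rule setting.intro[OF assms(1,2) R])
  show ?thesis by (rule main[OF assms(4,5)])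
qed

end
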